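(* Let $T$ be a $3$-CET with exactly one flip, with domain $S^1\setminus\{a_0,a_1,a_2\}$ where $0=a_0<a_1<a_2<a_3=1$ and $I_i=(a_{i-1},a_i)$, $i=1,2,3$, such that $I_1$ is the flip of $T$ and $T(I_1)<T(I_3)<T(I_2)$ in the cyclic order. Assume $T$ has no periodic points. Let $N\ge2$ be the least positive integer with $T^N(I_1)\cap I_1\neq\emptyset$ (so that $T^n(I_1)$, $0\le n\le N-1$, are pairwise disjoint). Assume that $a_2\in T^{n_0}(I_1)$ for some $1\le n_0\le N-1$, let $d\in I_1$ be such that $T^{n_0}(d)=a_2$, and write $I_1\setminus\{d\}=I_\ell\cup I_r$ with $I_\ell=(a_0,d)$ and $I_r=(d,a_1)$ (so $I_\ell<I_r$ in $S^1\setminus\{a_2\}$). Then either $a_0\in T^N(I_\ell)$ or $a_1\in T^N(I_r)$.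
   Context: $S^1=[0,1]/(0\sim1)$ with orientation induced by $[0,1]$ and points written as points of $[0,1]$. A $3$-CET is an injective map $T:I_1\cup I_2\cup I_3\to S^1$, where $I_1,I_2,I_3$ are pairwise disjoint open subintervals whose closures cover $S^1$, which is an isometry on each $I_i$ and cannot be continuously extended to a larger open set. A flip is an $I_i$ on which $T$ reverses orientation. For a set $J$, $T^n(J)=\{T^n(x): x\in J\cap\mathrm{Dom}(T^n)\}$. For subintervals $J_1,J_2,J_3$ of $S^1$, $J_1<J_2<J_3$ means every triple in $J_1\times J_2\times J_3$ is cyclically ordered; for subintervals of $S^1\setminus\{p\}$, $J_1<J_2$ refers to the linear order on $S^1\setminus\{p\}$ induced by the cyclic order. A periodic point is $p$ with $T^m(p)=p$ for some $m\ge1$. *)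

theory Defs
  imports Complex_Main
begin

text \<open>The circle S^1 = [0,1]/(0~1) is represented by real numbers in [0,1);
  a real number x stands for the point frac x.\<close>

definition cdist :: "real \<Rightarrow> real \<Rightarrow> real" where
  "cdist x y = min (frac (x - y)) (frac (y - x))"

definition cyc :: "real \<Rightarrow> real \<Rightarrow> real \<Rightarrow> bool" where
  "cyc x y z \<longleftrightarrow> (x < y \<and> y < z) \<or> (y < z \<and> z < x) \<or> (z < x \<and> x < y)"

definition cyc_sets :: "real set \<Rightarrow> real set \<Rightarrow> real set \<Rightarrow> bool" where
  "cyc_sets A B C \<longleftrightarrow> (\<forall>x\<in>A. \<forall>y\<in>B. \<forall>z\<in>C. cyc x y z)"

definition circ_isometry_on :: "(real \<Rightarrow> real) \<Rightarrow> real set \<Rightarrow> bool" where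
  "circ_isometry_on T I \<longleftrightarrow>
     (\<exists>c. (\<forall>x\<in>I. T x = frac (x + c)) \<or> (\<forall>x\<in>I. T x = frac (c - x)))"

definition flip_on :: "(real \<Rightarrow> real) \<Rightarrow> real set \<Rightarrow> bool" where
  "flip_on T I \<longleftrightarrow> (\<exists>c. \<forall>x\<in>I. T x = frac (c - x))"

definition no_cont_ext_at :: "real set \<Rightarrow> (real \<Rightarrow> real) \<Rightarrow> real \<Rightarrow> bool" where
  "no_cont_ext_at D T a \<longleftrightarrow>
     \<not> (\<exists>p. \<forall>e>0. \<exists>\<delta>>0. \<forall>x\<in>D. cdist x a < \<delta> \<longrightarrow> cdist (T x) p < e)"

definition cet_dom :: "real \<Rightarrow> real \<Rightarrow> real set" where
  "cet_dom a1 a2 = {0<..<1} - {a1, a2}"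

definition CET3 :: "real \<Rightarrow> real \<Rightarrow> (real \<Rightarrow> real) \<Rightarrow> bool" where
  "CET3 a1 a2 T \<longleftrightarrow>
     0 < a1 \<and> a1 < a2 \<and> a2 < 1 \<and>
     inj_on T (cet_dom a1 a2) \<and>
     circ_isometry_on T {0<..<a1} \<and> circ_isometry_on T {a1<..<a2} \<and>
     circ_isometry_on T {a2<..<1} \<and>
     no_cont_ext_at (cet_dom a1 a2) T 0 \<and> no_cont_ext_at (cet_dom a1 a2) T a1 \<and>
     no_cont_ext_at (cet_dom a1 a2) T a2"

definition iter_dom :: "real set \<Rightarrow> (real \<Rightarrow> real) \<Rightarrow> nat \<Rightarrow> real set" where
  "iter_dom D T n = {x. \<forall>k<n. (T ^^ k) x \<in> D}"

definition iter_img :: "real set \<Rightarrow> (real \<Rightarrow> real) \<Rightarrow> nat \<Rightarrow> real set \<Rightarrow> real set" where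
  "iter_img D T n J = (T ^^ n) ` (J \<inter> iter_dom D T n)"

definition has_periodic_point :: "real set \<Rightarrow> (real \<Rightarrow> real) \<Rightarrow> bool" where
  "has_periodic_point D T \<longleftrightarrow> (\<exists>p m. m \<ge> 1 \<and> p \<in> iter_dom D T m \<and> (T ^^ m) p = p)"

end

theory Submission
  imports Defs
begin


lemma iter_dom_Suc: "x \<in> iter_dom D T (Suc k) \<longleftrightarrow> x \<in> iter_dom D T k \<and> (T^^k) x \<in> D"
  unfolding iter_dom_def using less_Suc_eq by auto

lemma iter_dom_mono: "k \<le> k' \<Longrightarrow> x \<in> iter_dom D T k' \<Longrightarrow> x \<in> iter_dom D T k"
  unfolding iter_dom_def by auto

lemma iter_dom_add: "x \<in> iter_dom D T (a + b) \<Longrightarrow> (T^^a) x \<in> iter_dom D T b"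
proof -
  assume h: "x \<in> iter_dom D T (a + b)"
  have "\<forall>k<b. (T ^^ k) ((T ^^ a) x) \<in> D"
  proof (intro allI impI)
    fix k assume "k < b"
    then have "(T ^^ (k + a)) x \<in> D" using h unfolding iter_dom_def by simp
    then show "(T ^^ k) ((T ^^ a) x) \<in> D" by (simp add: funpow_add)
  qed
  then show ?thesis unfolding iter_dom_def by simp
qed

lemma inj_iter: "inj_on T D \<Longrightarrow> inj_on (T^^k) (iter_dom D T k)"
proof (induction k)
  case 0 then show ?case by simp
next
  case (Suc k)
  show ?case
  proof (rule inj_onI)
    fix x y assume x: "x \<in> iter_dom D T (Suc k)" and y: "y \<in> iter_dom D T (Suc k)"
      and e: "(T ^^ Suc k) x = (T ^^ Suc k) y"
    from x y have "(T^^k) x \<in> D" "(T^^k) y \<in> D" "x \<in> iter_dom D T k" "y \<in> iter_dom D T k"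
      by (auto simp: iter_dom_Suc)
    moreover from e have "T ((T^^k) x) = T ((T^^k) y)" by simp
    ultimately have "(T^^k) x = (T^^k) y" using Suc.prems by (meson inj_onD)
    then show "x = y" using Suc.IH Suc.prems \<open>x \<in> iter_dom D T k\<close> \<open>y \<in> iter_dom D T k\<close>
      by (meson inj_onD)
  qed
qed

lemma frac_small: "-1 < (r::real) \<Longrightarrow> r < 1 \<Longrightarrow> frac r = (if r \<ge> 0 then r else r + 1)"
  by (auto simp: frac_unique_iff)

lemma cyc_frac:
  assumes "0 \<le> x" "x < 1" "0 \<le> y" "y < 1" "0 \<le> z" "z < 1"
  shows "cyc x y z \<longleftrightarrow> 0 < frac (y - x) \<and> frac (y - x) < frac (z - x)"
  using assms by (auto simp: cyc_def frac_small)

lemma ord_conclude: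
  fixes A1 L2 L3 b g :: real
  assumes "0<A1" "0<L2" "0<L3" "A1+L2+L3=1" "0\<le>b" "b<1" "0\<le>g" "g<1"
    and H: "\<And>u v w. 0<u \<Longrightarrow> u<A1 \<Longrightarrow> 0<v \<Longrightarrow> v<L3 \<Longrightarrow> 0<w \<Longrightarrow> w<L2 \<Longrightarrow>
            0 < frac(b+v+u) \<and> frac(b+v+u) < frac(g+w+u)"
  shows "b = 0 \<and> g = L3"
proof -
  have bL: "b \<le> L2"
  proof (rule ccontr)
    assume "\<not> b \<le> L2"
    define u where "u = (1-b)*A1/(A1+L3)"
    define v where "v = (1-b)*L3/(A1+L3)"
    have nz: "A1+L3 \<noteq> 0" using assms by auto
    have "(1-b)*A1/(A1+L3) + (1-b)*L3/(A1+L3) = (1-b)*(A1+L3)/(A1+L3)"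
      by (simp add: add_divide_distrib[symmetric] distrib_left)
    also have "\<dots> = 1 - b" using nz by simp
    finally have uv: "u + v = 1 - b" unfolding u_def v_def .
    have "u < A1" unfolding u_def using assms \<open>\<not> b \<le> L2\<close>
      by (simp add: divide_less_eq mult_strict_right_mono)
    moreover have "v < L3" unfolding v_def using assms \<open>\<not> b \<le> L2\<close>
      by (simp add: divide_less_eq mult_strict_right_mono)
    moreover have "0 < u" "0 < v" unfolding u_def v_def using assms by auto
    ultimately have "0 < frac (b+v+u)" using H[of u v "L2/2"] assms by auto
    moreover have "b+v+u = 1" using uv by simp
    ultimately show False by simp
  qed
  have gL: "g \<le> L3"
  proof (rule ccontr)
    assume "\<not> g \<le> L3"
    define u where "u = (1-g)*A1/(A1+L2)"
    define w where "w = (1-g)*L2/(A1+L2)"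
    have nz: "A1+L2 \<noteq> 0" using assms by auto
    have "(1-g)*A1/(A1+L2) + (1-g)*L2/(A1+L2) = (1-g)*(A1+L2)/(A1+L2)"
      by (simp add: add_divide_distrib[symmetric] distrib_left)
    also have "\<dots> = 1 - g" using nz by simp
    finally have uv: "u + w = 1 - g" unfolding u_def w_def .
    have "u < A1" unfolding u_def using assms \<open>\<not> g \<le> L3\<close>
      by (simp add: divide_less_eq mult_strict_right_mono)
    moreover have "w < L2" unfolding w_def using assms \<open>\<not> g \<le> L3\<close>
      by (simp add: divide_less_eq mult_strict_right_mono)
    moreover have "0 < u" "0 < w" unfolding u_def w_def using assms by auto
    ultimately have "frac (b+L3/2+u) < frac(g+w+u)" using H[of u "L3/2" w] assms by auto
    moreover have "g+w+u = 1" using uv by simp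
    ultimately show False using frac_ge_0[of "b + L3 / 2 + u"] by simp
  qed
  have main: "b + L3 \<le> g"
  proof (rule ccontr)
    assume "\<not> b + L3 \<le> g"
    define e where "e = min (b+L3-g) (min L3 L2) / 2"
    have e: "0 < e" "e < L3" "e < L2" "2*e \<le> b+L3-g" unfolding e_def using assms \<open>\<not> b + L3 \<le> g\<close> by auto
    have "frac (b+(L3-e)+A1/2) < frac(g+e+A1/2)" using H[of "A1/2" "L3 - e" e] e assms by auto
    moreover have "frac (b+(L3-e)+A1/2) = b+(L3-e)+A1/2" using e assms bL by (intro frac_eq_id) auto
    moreover have "frac (g+e+A1/2) = g+e+A1/2" using e assms gL by (intro frac_eq_id) auto
    ultimately show False using e by simp
  qed
  then show ?thesis using gL assms by auto
qed

lemma ff: "frac (frac X - frac Y) = frac (X - Y)"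
proof -
  have "frac (frac X - frac Y) = frac (frac X - Y)" by (rule frac_diff_simp)
  also have "\<dots> = frac (X - Y)" by (metis frac_add_simps(1) diff_conv_add_uminus)
  finally show ?thesis .
qed

lemma derive_consts:
  assumes cet: "CET3 a1 a2 T"
    and flip1: "flip_on T {0<..<a1}"
    and noflip2: "\<not> flip_on T {a1<..<a2}"
    and noflip3: "\<not> flip_on T {a2<..<1}"
    and order: "cyc_sets (T ` {0<..<a1}) (T ` {a2<..<1}) (T ` {a1<..<a2})"
  shows "\<exists>c. (\<forall>x. 0<x \<longrightarrow> x<a1 \<longrightarrow> T x = frac(c - x)) \<and>
             (\<forall>x. a1<x \<longrightarrow> x<a2 \<longrightarrow> T x = frac(x + c - a1 - a2)) \<and>
             (\<forall>x. a2<x \<longrightarrow> x<1 \<longrightarrow> T x = frac(x + c - a2))"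
proof -
  have a: "0 < a1" "a1 < a2" "a2 < 1" using cet unfolding CET3_def by auto
  obtain c1 where h1: "\<forall>x\<in>{0<..<a1}. T x = frac (c1 - x)" using flip1 unfolding flip_on_def by auto
  obtain c2 where h2: "\<forall>x\<in>{a1<..<a2}. T x = frac (x + c2)"
    using cet noflip2 unfolding CET3_def circ_isometry_on_def flip_on_def by auto
  obtain c3 where h3: "\<forall>x\<in>{a2<..<1}. T x = frac (x + c3)"
    using cet noflip3 unfolding CET3_def circ_isometry_on_def flip_on_def by auto
  define b where "b = frac (c3 - c1 + a2)"
  define g where "g = frac (c2 - c1 + a1)"
  have H: "0 < frac(b+v+u) \<and> frac(b+v+u) < frac(g+w+u)"
    if u: "0<u" "u<a1" and v: "0<v" "v<1-a2" and w: "0<w" "w<a2-a1" for u v w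
  proof -
    have "cyc (T u) (T (v+a2)) (T (w+a1))"
      using order u v w unfolding cyc_sets_def by auto
    moreover have "T u = frac (c1 - u)" "T (v+a2) = frac (v + a2 + c3)" "T (w+a1) = frac (w + a1 + c2)"
      using h1 h2 h3 u v w by auto
    ultimately have c: "cyc (frac (c1 - u)) (frac (v + a2 + c3)) (frac (w + a1 + c2))" by simp
    have e1: "frac(b+v+u) = frac (frac (v + a2 + c3) - frac (c1 - u))"
    proof -
      have "frac(b+v+u) = frac(b + (v+u))" by (simp add: add.assoc)
      also have "\<dots> = frac((c3 - c1 + a2) + (v+u))" unfolding b_def by simp
      also have "\<dots> = frac(v + a2 + c3 - (c1 - u))" by (rule arg_cong[where f=frac]) (simp add: algebra_simps)
      finally show ?thesis by (simp add: ff)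
    qed
    have e2: "frac(g+w+u) = frac (frac (w + a1 + c2) - frac (c1 - u))"
    proof -
      have "frac(g+w+u) = frac(g + (w+u))" by (simp add: add.assoc)
      also have "\<dots> = frac((c2 - c1 + a1) + (w+u))" unfolding g_def by simp
      also have "\<dots> = frac(w + a1 + c2 - (c1 - u))" by (rule arg_cong[where f=frac]) (simp add: algebra_simps)
      finally show ?thesis by (simp add: ff)
    qed
    have "0 < frac (frac (v + a2 + c3) - frac (c1 - u)) \<and> frac (frac (v + a2 + c3) - frac (c1 - u)) < frac (frac (w + a1 + c2) - frac (c1 - u))"
      using c cyc_frac[of "frac (c1 - u)" "frac (v + a2 + c3)" "frac (w + a1 + c2)"]
      frac_lt_1 frac_ge_0 by blast
    then show ?thesis by (simp only: e1 e2)
  qed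
  have "b = 0 \<and> g = 1 - a2"
    by (rule ord_conclude[of a1 "a2-a1" "1-a2" b g]) (use a H b_def g_def frac_lt_1 in auto)
  then have i3: "c3 - c1 + a2 \<in> \<int>" and i2': "(c2 - c1 + a1) - (1 - a2) \<in> \<int>"
    unfolding b_def g_def by (auto simp: frac_unique_iff)
  have i2: "c2 - c1 + a1 + a2 \<in> \<int>"
  proof -
    have "(c2 - c1 + a1) - (1 - a2) + 1 \<in> \<int>" using i2' by (intro Ints_add) auto
    then show ?thesis by (simp add: algebra_simps)
  qed
  show ?thesis
  proof (intro exI[of _ c1] conjI allI impI)
    fix x assume "0<x" "x<a1" then show "T x = frac(c1 - x)" using h1 by auto
  next
    fix x assume "a1<x" "x<a2"
    then have "T x = frac ((x + c1 - a1 - a2) + (c2 - c1 + a1 + a2))" using h2 by (simp add: algebra_simps)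
    then show "T x = frac(x + c1 - a1 - a2)" using i2 frac_add_int_right by metis
  next
    fix x assume "a2<x" "x<1"
    then have "T x = frac ((x + c1 - a2) + (c3 - c1 + a2))" using h3 by (simp add: algebra_simps)
    then show "T x = frac(x + c1 - a2)" using i3 frac_add_int_right by metis
  qed
qed




declare frac_eq_0_iff[simp del] frac_gt_0_iff[simp del]

lemma frac_shift: "frac (e + w) = u \<Longrightarrow> frac (e + (w + x)) = frac (u + x)"
proof -
  assume h: "frac (e + w) = u"
  have "frac (e + (w + x)) = frac ((e + w) + x)" by (simp add: add.assoc)
  also have "\<dots> = frac (frac (e + w) + x)" by simp
  finally show ?thesis using h by simp
qed

locale L34 =
  fixes a1 a2 c d :: real and T :: "real \<Rightarrow> real" and N n0 :: nat
  assumes a1: "0 < a1" and a12: "a1 < a2" and a2: "a2 < 1"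
  and T1: "\<And>x. 0 < x \<Longrightarrow> x < a1 \<Longrightarrow> T x = frac (c - x)"
  and T2: "\<And>x. a1 < x \<Longrightarrow> x < a2 \<Longrightarrow> T x = frac (x + c - a1 - a2)"
  and T3: "\<And>x. a2 < x \<Longrightarrow> x < 1 \<Longrightarrow> T x = frac (x + c - a2)"
  and inj: "inj_on T (cet_dom a1 a2)"
  and aper: "\<not> has_periodic_point (cet_dom a1 a2) T"
  and N2: "N \<ge> 2"
  and Nhit: "iter_img (cet_dom a1 a2) T N {0<..<a1} \<inter> {0<..<a1} \<noteq> {}"
  and Nleast: "\<And>n. 1 \<le> n \<Longrightarrow> n < N \<Longrightarrow>
                   iter_img (cet_dom a1 a2) T n {0<..<a1} \<inter> {0<..<a1} = {}"
  and n0: "1 \<le> n0" "n0 < N"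
  and d: "0 < d" "d < a1" "d \<in> iter_dom (cet_dom a1 a2) T n0" "(T ^^ n0) d = a2"
begin

lemma inD: "x \<in> cet_dom a1 a2 \<longleftrightarrow> 0<x \<and> x<1 \<and> x \<noteq> a1 \<and> x \<noteq> a2"
  by (auto simp: cet_dom_def)

lemma notI1:
  assumes "0<t" "t<a1" "t \<in> iter_dom (cet_dom a1 a2) T k" "1 \<le> k" "k < N"
  shows "\<not> (0 < (T^^k) t \<and> (T^^k) t < a1)"
proof
  assume h: "0 < (T^^k) t \<and> (T^^k) t < a1"
  have "(T^^k) t \<in> iter_img (cet_dom a1 a2) T k {0<..<a1}"
    unfolding iter_img_def using assms by auto
  then show False using Nleast[OF assms(4,5)] h by auto
qed

lemma disj_le:
  assumes "0<t" "t<a1" "0<t'" "t'<a1" "t \<in> iter_dom (cet_dom a1 a2) T k"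
    "t' \<in> iter_dom (cet_dom a1 a2) T k'" "k \<le> k'" "k' < N" "(T^^k) t = (T^^k') t'"
  shows "k = k' \<and> t = t'"
proof -
  obtain r where r: "k' = k + r" using assms(7) le_iff_add by blast
  have tr: "(T^^r) t' \<in> iter_dom (cet_dom a1 a2) T k"
    using iter_dom_add[of t' "cet_dom a1 a2" T r k] assms(6) r by (simp add: add.commute)
  have "(T^^k') t' = (T^^k) ((T^^r) t')" by (simp add: r funpow_add)
  then have "t = (T^^r) t'" using inj_iter[OF inj, of k] assms(5,9) tr by (metis inj_onD)
  show ?thesis
  proof (cases "r = 0")
    case True then show ?thesis using \<open>t = (T^^r) t'\<close> r by simp
  next
    case False
    have "t' \<in> iter_dom (cet_dom a1 a2) T r" using iter_dom_mono[of r k' t'] assms(6) r by simp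
    then have "t \<in> iter_img (cet_dom a1 a2) T r {0<..<a1}"
      unfolding iter_img_def using \<open>t = (T^^r) t'\<close> assms by auto
    then show ?thesis using Nleast[of r] False r assms by auto
  qed
qed

lemma disj:
  assumes "0<t" "t<a1" "0<t'" "t'<a1" "t \<in> iter_dom (cet_dom a1 a2) T k"
    "t' \<in> iter_dom (cet_dom a1 a2) T k'" "k < N" "k' < N" "(T^^k) t = (T^^k') t'"
  shows "k = k' \<and> t = t'"
proof (cases "k \<le> k'")
  case True then show ?thesis using disj_le assms by blast
next
  case False then show ?thesis using disj_le[of t' t k' k] assms by auto
qed

lemma stepV2:
  assumes H: "\<And>w. lo<w \<Longrightarrow> w<hi \<Longrightarrow> \<not>(0 < frac(e+w) \<and> frac(e+w) < a1) \<and> frac(e+w) \<noteq> a2"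
  shows "(\<forall>w. lo<w \<longrightarrow> w<hi \<longrightarrow> a2 < frac(e+w) \<and> frac(e+w) \<in> cet_dom a1 a2 \<and> T(frac(e+w)) = frac(e + (c - a2) + w))
       \<or> (\<forall>w. lo<w \<longrightarrow> w<hi \<longrightarrow> frac(e+w) < a2 \<and> frac(e+w) \<in> cet_dom a1 a2 \<and> T(frac(e+w)) = frac(e + (c-a1-a2) + w))"
proof -
  have gt: "a1 < frac(e+w)" if w: "lo<w" "w<hi" for w
  proof (rule ccontr)
    assume "\<not> a1 < frac(e+w)"
    with H[OF w] have "frac(e+w) = 0 \<or> frac(e+w) = a1" using frac_ge_0[of "e+w"] by linarith
    then show False
    proof
      assume z: "frac(e+w) = 0"
      define x where "x = min (hi - w) a1 / 2"
      have x: "0<x" "x < hi - w" "x < a1" using a1 w by (auto simp: x_def)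
      have "frac(e + (w+x)) = frac(0 + x)" using frac_shift[OF z] .
      also have "\<dots> = x" using x a12 a2 by (simp add: frac_eq)
      finally show False using H[of "w+x"] x w by auto
    next
      assume z: "frac(e+w) = a1"
      define x where "x = min (w - lo) a1 / 2"
      have x: "0<x" "x < w - lo" "x < a1" using a1 w by (auto simp: x_def)
      have "frac(e + (w+ -x)) = frac(a1 + - x)" using frac_shift[OF z] .
      also have "\<dots> = a1 - x" using x a12 a2 by (simp add: frac_eq)
      finally show False using H[of "w - x"] x w by auto
    qed
  qed
  have nz: "frac(e+w) \<noteq> 0 \<and> frac(e+w) \<noteq> a2" if "lo<w" "w<hi" for w
    using gt[OF that] H[OF that] a1 by (auto simp del: frac_eq_0_iff)
  have sub1: False if pq: "lo<p" "p<q" "q<hi" and fl: "\<lfloor>e+p\<rfloor> \<noteq> \<lfloor>e+q\<rfloor>" for p q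
  proof -
    define n where "n = \<lfloor>e+q\<rfloor>"
    have "\<lfloor>e+p\<rfloor> \<le> n" unfolding n_def using pq by (intro floor_mono) auto
    then have "\<lfloor>e+p\<rfloor> + 1 \<le> n" using fl n_def by auto
    then have "e + p < of_int n" by linarith
    moreover have "of_int n \<le> e + q" unfolding n_def by simp
    ultimately have "lo < of_int n - e" "of_int n - e < hi" using pq by auto
    moreover have "frac (e + (of_int n - e)) = 0" by simp
    ultimately show False using nz by blast
  qed
  have sub2: False if pq: "lo<p" "p<hi" "lo<q" "q<hi" and fl: "\<lfloor>e+p\<rfloor> = \<lfloor>e+q\<rfloor>"
    and f: "frac(e+p) < a2" "a2 < frac(e+q)" for p q
  proof -
    define n where "n = \<lfloor>e+q\<rfloor>"
    define w where "w = of_int n + a2 - e"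
    have fp: "frac (e+p) = e + p - of_int n" using fl n_def by (simp add: frac_def)
    have fq: "frac (e+q) = e + q - of_int n" using n_def by (simp add: frac_def)
    have "min p q < w" "w < max p q" using f fp fq unfolding w_def by auto
    then have "lo < w" "w < hi" using pq by auto
    moreover have "frac (e + w) = a2" unfolding w_def using a12 a1 a2
      by (simp add: frac_eq)
    ultimately show False using nz by blast
  qed
  have mix: False if "lo<p" "p<hi" "lo<q" "q<hi" "frac(e+p) < a2" "a2 < frac(e+q)" for p q
  proof (cases "\<lfloor>e+p\<rfloor> = \<lfloor>e+q\<rfloor>")
    case True then show ?thesis using sub2 that by blast
  next
    case False
    have "p \<noteq> q" using that by auto
    then show ?thesis
    proof (cases "p < q")
      case True then show ?thesis using sub1[of p q] False that by auto
    next
      case False2: False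
      then show ?thesis using sub1[of q p] False that \<open>p \<noteq> q\<close> by auto
    qed
  qed
  show ?thesis
  proof (cases "\<exists>q. lo<q \<and> q<hi \<and> a2 < frac(e+q)")
    case True
    then obtain q where q: "lo<q" "q<hi" "a2 < frac(e+q)" by blast
    have "a2 < frac(e+w) \<and> frac(e+w) \<in> cet_dom a1 a2 \<and> T(frac(e+w)) = frac(e + (c - a2) + w)"
      if w: "lo<w" "w<hi" for w
    proof -
      have g: "a2 < frac(e+w)" using mix[of w q] w q nz[OF w] by fastforce
      have "T (frac(e+w)) = frac (frac(e+w) + c - a2)" using T3 g frac_lt_1 by blast
      also have "\<dots> = frac (frac(e+w) + (c - a2))" by (simp add: algebra_simps)
      also have "\<dots> = frac (e + w + (c - a2))" by simp
      also have "\<dots> = frac(e + (c - a2) + w)" by (simp add: algebra_simps)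
      finally show ?thesis using g a12 a1 frac_lt_1[of "e+w"] by (auto simp: inD)
    qed
    then show ?thesis by blast
  next
    case False
    have "frac(e+w) < a2 \<and> frac(e+w) \<in> cet_dom a1 a2 \<and> T(frac(e+w)) = frac(e + (c-a1-a2) + w)"
      if w: "lo<w" "w<hi" for w
    proof -
      have g: "frac(e+w) < a2" using False w nz[OF w] by fastforce
      have "T (frac(e+w)) = frac (frac(e+w) + c - a1 - a2)" using T2 g gt[OF w] by blast
      also have "\<dots> = frac (frac(e+w) + (c - a1 - a2))" by (simp add: algebra_simps)
      also have "\<dots> = frac (e + w + (c - a1 - a2))" by simp
      also have "\<dots> = frac(e + (c - a1 - a2) + w)" by (simp add: algebra_simps)
      finally show ?thesis using g gt[OF w] a12 a1 a2 by (auto simp: inD)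
    qed
    then show ?thesis by blast
  qed
qed

lemma stepV:
  assumes H: "\<And>w. lo<w \<Longrightarrow> w<hi \<Longrightarrow> \<not>(0 < frac(e+w) \<and> frac(e+w) < a1) \<and> frac(e+w) \<noteq> a2"
  shows "\<exists>s. \<forall>w. lo<w \<longrightarrow> w<hi \<longrightarrow> frac(e+w) \<in> cet_dom a1 a2 \<and> T(frac(e+w)) = frac(e + s + w)"
  using stepV2[OF H] by blast

end



context L34 begin

lemma dnot: "d \<notin> iter_dom (cet_dom a1 a2) T N"
proof
  assume "d \<in> iter_dom (cet_dom a1 a2) T N"
  then have "(T^^n0) d \<in> cet_dom a1 a2" using n0 unfolding iter_dom_def by auto
  then show False using d by (simp add: inD)
qed

lemma prefix: "1 \<le> k \<Longrightarrow> k \<le> n0 \<Longrightarrow>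
  \<exists>G. \<forall>t. 0<t \<longrightarrow> t<a1 \<longrightarrow> t \<in> iter_dom (cet_dom a1 a2) T k \<and> (T^^k) t = frac(G - t)"
proof (induction k)
  case 0 then show ?case by simp
next
  case (Suc k)
  show ?case
  proof (cases "k = 0")
    case True
    show ?thesis
    proof (rule exI[of _ c], intro allI impI conjI)
      fix t assume t: "0<t" "t<a1"
      show "t \<in> iter_dom (cet_dom a1 a2) T (Suc k)" using True t a12 a2 by (simp add: iter_dom_def inD)
      show "(T^^Suc k) t = frac(c - t)" using True t T1 by simp
    qed
  next
    case False
    then obtain G where G: "\<forall>t. 0<t \<longrightarrow> t<a1 \<longrightarrow> t \<in> iter_dom (cet_dom a1 a2) T k \<and> (T^^k) t = frac(G - t)"
      using Suc by auto
    have kk: "1 \<le> k" "k < n0" "k < N" using False Suc.prems n0 by auto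
    have H: "\<not>(0<frac(G+w) \<and> frac(G+w)<a1) \<and> frac(G+w) \<noteq> a2" if w: "-a1 < w" "w < 0" for w
    proof -
      have t: "0 < -w" "-w < a1" using w by auto
      have e: "frac(G+w) = (T^^k)(-w)" using G t by simp
      have "\<not>(0<(T^^k)(-w) \<and> (T^^k)(-w) < a1)" using notI1[OF t _ kk(1,3)] G t by blast
      moreover have "(T^^k)(-w) \<noteq> a2"
      proof
        assume "(T^^k)(-w) = a2"
        then have "(T^^k)(-w) = (T^^n0) d" using d by simp
        then show False using disj[of "-w" d k n0] t d G kk n0 by auto
      qed
      ultimately show ?thesis using e by simp
    qed
    obtain s where s: "\<forall>w. -a1<w \<longrightarrow> w<0 \<longrightarrow> frac(G+w) \<in> cet_dom a1 a2 \<and> T(frac(G+w)) = frac(G + s + w)"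
      using stepV[OF H] by blast
    show ?thesis
    proof (rule exI[of _ "G+s"], intro allI impI conjI)
      fix t assume t: "0<t" "t<a1"
      have 1: "(T^^k) t = frac(G + -t)" using G t by simp
      have 2: "frac(G + -t) \<in> cet_dom a1 a2 \<and> T(frac(G + -t)) = frac(G + s + -t)" using s[rule_format, of "-t"] t by auto
      show "t \<in> iter_dom (cet_dom a1 a2) T (Suc k)" using 1 2 G t by (simp add: iter_dom_Suc)
      show "(T^^Suc k) t = frac(G + s - t)" using 1 2 by simp
    qed
  qed
qed

lemma G0: "\<exists>G. (\<forall>t. 0<t \<longrightarrow> t<a1 \<longrightarrow> t \<in> iter_dom (cet_dom a1 a2) T n0 \<and> (T^^n0) t = frac(G - t)) \<and> frac (G - d) = a2"
proof -
  obtain G where G: "\<forall>t. 0<t \<longrightarrow> t<a1 \<longrightarrow> t \<in> iter_dom (cet_dom a1 a2) T n0 \<and> (T^^n0) t = frac(G - t)"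
    using prefix[of n0] n0 by auto
  then have "frac (G - d) = a2" using d by auto
  then show ?thesis using G by blast
qed

end



context L34 begin

lemma chain:
  fixes L E0 :: real and p1 p2 :: "real \<Rightarrow> real" and \<tau>1 \<tau>2 M :: nat and G :: real
  assumes L: "0 < L"
  and G: "\<forall>t. 0<t \<longrightarrow> t<a1 \<longrightarrow> t \<in> iter_dom (cet_dom a1 a2) T n0 \<and> (T^^n0) t = frac(G - t)" "frac(G - d) = a2"
  and p1: "\<And>w. -L<w \<Longrightarrow> w<0 \<Longrightarrow> 0 < p1 w \<and> p1 w < a1 \<and> p1 w \<noteq> d"
  and p2: "\<And>w. 0<w \<Longrightarrow> w<L \<Longrightarrow> 0 < p2 w \<and> p2 w < a1 \<and> p2 w \<noteq> d"
  and b1: "\<And>w. -L<w \<Longrightarrow> w<0 \<Longrightarrow> p1 w \<in> iter_dom (cet_dom a1 a2) T \<tau>1 \<and> (T^^\<tau>1)(p1 w) = frac(E0 + w)"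
  and b2: "\<And>w. 0<w \<Longrightarrow> w<L \<Longrightarrow> p2 w \<in> iter_dom (cet_dom a1 a2) T \<tau>2 \<and> (T^^\<tau>2)(p2 w) = frac(E0 + w)"
  and t: "1 \<le> \<tau>1" "1 \<le> \<tau>2"
  and x: "n0 < \<tau>2 \<or> (\<forall>e. p2 e \<noteq> d - e)"
  shows "\<tau>1 + M \<le> N \<Longrightarrow> \<tau>2 + M \<le> N \<Longrightarrow> \<exists>E.
     (\<forall>w. -L<w \<longrightarrow> w<0 \<longrightarrow> p1 w \<in> iter_dom (cet_dom a1 a2) T (\<tau>1+M) \<and> (T^^(\<tau>1+M))(p1 w) = frac(E + w)) \<and>
     (\<forall>w. 0<w \<longrightarrow> w<L \<longrightarrow> p2 w \<in> iter_dom (cet_dom a1 a2) T (\<tau>2+M) \<and> (T^^(\<tau>2+M))(p2 w) = frac(E + w))"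
proof (induction M)
  case 0 show ?case using b1 b2 by (intro exI[of _ E0]) auto
next
  case (Suc M)
  obtain E where E1: "\<forall>w. -L<w \<longrightarrow> w<0 \<longrightarrow> p1 w \<in> iter_dom (cet_dom a1 a2) T (\<tau>1+M) \<and> (T^^(\<tau>1+M))(p1 w) = frac(E + w)"
    and E2: "\<forall>w. 0<w \<longrightarrow> w<L \<longrightarrow> p2 w \<in> iter_dom (cet_dom a1 a2) T (\<tau>2+M) \<and> (T^^(\<tau>2+M))(p2 w) = frac(E + w)"
    using Suc by auto
  have k: "1 \<le> \<tau>1+M" "\<tau>1+M < N" "1 \<le> \<tau>2+M" "\<tau>2+M < N" using Suc.prems t by auto
  have H: "\<not>(0<frac(E+w) \<and> frac(E+w)<a1) \<and> frac(E+w) \<noteq> a2" if w: "-L<w" "w<L" for w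
  proof -
    consider "w < 0" | "w > 0" | "w = 0" by linarith
    then show ?thesis
    proof cases
      case 1
      have pp: "0 < p1 w" "p1 w < a1" "p1 w \<noteq> d" using p1 w 1 by auto
      have e: "frac(E+w) = (T^^(\<tau>1+M))(p1 w)" and dom: "p1 w \<in> iter_dom (cet_dom a1 a2) T (\<tau>1+M)"
        using E1 w 1 by auto
      have "\<not>(0<(T^^(\<tau>1+M))(p1 w) \<and> (T^^(\<tau>1+M))(p1 w) < a1)" using notI1[OF pp(1,2) dom k(1,2)] .
      moreover have "(T^^(\<tau>1+M))(p1 w) \<noteq> a2"
      proof
        assume "(T^^(\<tau>1+M))(p1 w) = a2"
        then have "(T^^(\<tau>1+M))(p1 w) = (T^^n0) d" using d by simp
        then show False using disj[of "p1 w" d "\<tau>1+M" n0] pp d dom k n0 by auto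
      qed
      ultimately show ?thesis using e by simp
    next
      case 2
      have pp: "0 < p2 w" "p2 w < a1" "p2 w \<noteq> d" using p2 w 2 by auto
      have e: "frac(E+w) = (T^^(\<tau>2+M))(p2 w)" and dom: "p2 w \<in> iter_dom (cet_dom a1 a2) T (\<tau>2+M)"
        using E2 w 2 by auto
      have "\<not>(0<(T^^(\<tau>2+M))(p2 w) \<and> (T^^(\<tau>2+M))(p2 w) < a1)" using notI1[OF pp(1,2) dom k(3,4)] .
      moreover have "(T^^(\<tau>2+M))(p2 w) \<noteq> a2"
      proof
        assume "(T^^(\<tau>2+M))(p2 w) = a2"
        then have "(T^^(\<tau>2+M))(p2 w) = (T^^n0) d" using d by simp
        then show False using disj[of "p2 w" d "\<tau>2+M" n0] pp d dom k n0 by auto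
      qed
      ultimately show ?thesis using e by simp
    next
      case 3
      have A: "\<not>(0<frac E \<and> frac E<a1)"
      proof
        assume h: "0<frac E \<and> frac E<a1"
        define y where "y = min (frac E) L / 2"
        have y: "0 < y" "y < frac E" "y < L" using h L by (auto simp: y_def)
        have "frac(E + -y) = frac(frac E + -y)" by (metis frac_add_simps(1))
        also have "\<dots> = frac E - y" using y frac_lt_1[of E] by (simp add: frac_eq)
        finally have e: "frac(E + -y) = frac E - y" by simp
        have pp: "0 < p1 (-y)" "p1 (-y) < a1" using p1 y by auto
        have "(T^^(\<tau>1+M))(p1 (-y)) = frac(E + -y)" and dom: "p1 (-y) \<in> iter_dom (cet_dom a1 a2) T (\<tau>1+M)"
          using E1 y by auto
        then show False using notI1[OF pp dom k(1,2)] e y h by auto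
      qed
      have B: "frac E \<noteq> a2"
      proof
        assume h: "frac E = a2"
        define y where "y = min L (min d (1 - a2)) / 2"
        have y: "0 < y" "y < L" "y < d" "y < 1 - a2" using L d a2 by (auto simp: y_def)
        have "frac(E + y) = frac(a2 + y)" by (metis frac_add_simps(1) h)
        then have e1: "(T^^(\<tau>2+M))(p2 y) = frac(a2 + y)" and dom: "p2 y \<in> iter_dom (cet_dom a1 a2) T (\<tau>2+M)"
          using E2 y by auto
        have "frac((G - d) + y) = frac(a2 + y)" by (metis frac_add_simps(1) G(2))
        then have "frac(G - (d - y)) = frac(a2 + y)" by (simp add: algebra_simps)
        moreover have "0 < d - y" "d - y < a1" using y d by auto
        ultimately have e2: "(T^^n0)(d - y) = frac(a2 + y)" and dom2: "d - y \<in> iter_dom (cet_dom a1 a2) T n0"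
          using G(1) by auto
        have pp: "0 < p2 y" "p2 y < a1" using p2 y by auto
        have "\<tau>2+M = n0 \<and> p2 y = d - y"
          using disj[of "p2 y" "d - y" "\<tau>2+M" n0] pp dom dom2 e1 e2 k n0 \<open>0 < d - y\<close> \<open>d - y < a1\<close> by auto
        then show False using x by auto
      qed
      show ?thesis using A B 3 by simp
    qed
  qed
  obtain s where s: "\<forall>w. -L<w \<longrightarrow> w<L \<longrightarrow> frac(E+w) \<in> cet_dom a1 a2 \<and> T(frac(E+w)) = frac(E + s + w)"
    using stepV[OF H] by blast
  show ?case
  proof (rule exI[of _ "E+s"], intro conjI allI impI)
    fix w assume w: "-L<w" "w<0"
    have 1: "(T^^(\<tau>1+M))(p1 w) = frac(E+w)" "p1 w \<in> iter_dom (cet_dom a1 a2) T (\<tau>1+M)" using E1 w by auto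
    have 2: "frac(E+w) \<in> cet_dom a1 a2" "T(frac(E+w)) = frac(E + s + w)" using s w L by auto
    show "p1 w \<in> iter_dom (cet_dom a1 a2) T (\<tau>1 + Suc M)" using 1 2 by (simp add: iter_dom_Suc)
    show "(T^^(\<tau>1 + Suc M))(p1 w) = frac(E + s + w)" using 1 2 by simp
  next
    fix w assume w: "0<w" "w<L"
    have 1: "(T^^(\<tau>2+M))(p2 w) = frac(E+w)" "p2 w \<in> iter_dom (cet_dom a1 a2) T (\<tau>2+M)" using E2 w by auto
    have 2: "frac(E+w) \<in> cet_dom a1 a2" "T(frac(E+w)) = frac(E + s + w)" using s w L by auto
    show "p2 w \<in> iter_dom (cet_dom a1 a2) T (\<tau>2 + Suc M)" using 1 2 by (simp add: iter_dom_Suc)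
    show "(T^^(\<tau>2 + Suc M))(p2 w) = frac(E + s + w)" using 1 2 by simp
  qed
qed

end



context L34 begin

lemma Tn0: 
  assumes G: "\<forall>t. 0<t \<longrightarrow> t<a1 \<longrightarrow> t \<in> iter_dom (cet_dom a1 a2) T n0 \<and> (T^^n0) t = frac(G - t)" "frac(G - d) = a2"
    and w: "0 < d - w" "d - w < a1"
  shows "d - w \<in> iter_dom (cet_dom a1 a2) T n0 \<and> (T^^n0) (d - w) = frac(a2 + w)"
proof -
  have "frac((G - d) + w) = frac(a2 + w)" by (metis frac_add_simps(1) G(2))
  then have "frac(G - (d - w)) = frac(a2 + w)" by (simp add: algebra_simps)
  then show ?thesis using G(1) w by auto
qed

lemma Hn0:
  assumes G: "\<forall>t. 0<t \<longrightarrow> t<a1 \<longrightarrow> t \<in> iter_dom (cet_dom a1 a2) T n0 \<and> (T^^n0) t = frac(G - t)" "frac(G - d) = a2"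
    and w: "0 < d - w" "d - w < a1" "w \<noteq> 0"
  shows "\<not>(0 < frac(a2+w) \<and> frac(a2+w) < a1) \<and> frac(a2+w) \<noteq> a2"
proof -
  have e: "d - w \<in> iter_dom (cet_dom a1 a2) T n0" "(T^^n0) (d - w) = frac(a2 + w)" using Tn0[OF G w(1,2)] by auto
  have "\<not>(0 < (T^^n0) (d - w) \<and> (T^^n0) (d - w) < a1)" using notI1[OF w(1,2) e(1)] n0 by auto
  moreover have "(T^^n0) (d - w) \<noteq> a2"
  proof
    assume "(T^^n0) (d - w) = a2"
    then have "(T^^n0) (d - w) = (T^^n0) d" using d by simp
    then show False using disj[of "d - w" d n0 n0] w d n0 e by auto
  qed
  ultimately show ?thesis using e by simp
qed

lemma Il: "\<exists>E. \<forall>t. 0<t \<longrightarrow> t<d \<longrightarrow> t \<in> iter_dom (cet_dom a1 a2) T (N-n0) \<and> (T^^(N-n0)) t = frac(E - t)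
          \<and> t \<in> iter_dom (cet_dom a1 a2) T N \<and> (T^^N) t = frac(E + d - t)"
proof -
  obtain G where G: "\<forall>t. 0<t \<longrightarrow> t<a1 \<longrightarrow> t \<in> iter_dom (cet_dom a1 a2) T n0 \<and> (T^^n0) t = frac(G - t)" "frac(G - d) = a2"
    using G0 by blast
  have H: "\<not>(0 < frac(a2+w) \<and> frac(a2+w) < a1) \<and> frac(a2+w) \<noteq> a2" if "0<w" "w<d" for w
    using Hn0[OF G] that d by auto
  have S: "\<forall>w. 0<w \<longrightarrow> w<d \<longrightarrow> a2 < frac(a2+w) \<and> frac(a2+w) \<in> cet_dom a1 a2 \<and> T(frac(a2+w)) = frac(a2 + (c - a2) + w)"
  proof -
    define y where "y = min d (1-a2) / 2"
    have y: "0<y" "y<d" "y<1-a2" using d(1,2) a2 by (auto simp: y_def)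
    have "frac(a2 + y) = a2 + y" using y a1 a12 by (simp add: frac_eq)
    then have "\<not> frac(a2 + y) < a2" using y by simp
    then show ?thesis using stepV2[of 0 d a2, OF H] y by blast
  qed
  have b2: "d - w \<in> iter_dom (cet_dom a1 a2) T (n0+1) \<and> (T^^(n0+1))(d - w) = frac(c + w)"
    if w: "0<w" "w<d" for w
  proof -
    have e: "d - w \<in> iter_dom (cet_dom a1 a2) T n0" "(T^^n0) (d - w) = frac(a2 + w)" using Tn0[OF G] w d by auto
    have s: "frac(a2+w) \<in> cet_dom a1 a2" "T(frac(a2+w)) = frac(c + w)" using S w by auto
    show ?thesis using e s by (simp add: iter_dom_Suc)
  qed
  have b1: "-w \<in> iter_dom (cet_dom a1 a2) T 1 \<and> (T^^1)(-w) = frac(c + w)" if w: "-d<w" "w<0" for w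
    using w d a12 a2 T1[of "-w"] by (simp add: iter_dom_def inD)
  obtain E where E1: "\<forall>w. -d<w \<longrightarrow> w<0 \<longrightarrow> -w \<in> iter_dom (cet_dom a1 a2) T (1+(N-n0-1)) \<and> (T^^(1+(N-n0-1)))(-w) = frac(E + w)"
    and E2: "\<forall>w. 0<w \<longrightarrow> w<d \<longrightarrow> d - w \<in> iter_dom (cet_dom a1 a2) T (n0+1+(N-n0-1)) \<and> (T^^(n0+1+(N-n0-1)))(d-w) = frac(E + w)"
    using chain[of d G "\<lambda>w. -w" "\<lambda>w. d - w" 1 c "n0+1" "N-n0-1", OF d(1) G _ _ b1 b2] d n0
    by fastforce
  have eq: "1+(N-n0-1) = N-n0" "n0+1+(N-n0-1) = N" using n0 by auto
  show ?thesis
  proof (rule exI[of _ E], intro allI impI conjI)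
    fix t assume t: "0<t" "t<d"
    show "t \<in> iter_dom (cet_dom a1 a2) T (N-n0)" "(T^^(N-n0)) t = frac(E - t)"
      using E1[unfolded eq, rule_format, of "-t"] t eq by auto
    have "d - (d - t) \<in> iter_dom (cet_dom a1 a2) T N \<and> (T^^N) (d - (d - t)) = frac(E + (d - t))"
      using E2[unfolded eq, rule_format, of "d - t"] t eq by auto
    then show "t \<in> iter_dom (cet_dom a1 a2) T N" "(T^^N) t = frac(E + d - t)"
      by (auto simp: algebra_simps)
  qed
qed

lemma Ir: "\<exists>F. \<forall>t. d<t \<longrightarrow> t<a1 \<longrightarrow> t \<in> iter_dom (cet_dom a1 a2) T N \<and> (T^^N) t = frac(F + d - t)
          \<and> t \<in> iter_dom (cet_dom a1 a2) T (N-n0) \<and> (T^^(N-n0)) t = frac(F + a1 - t)"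
proof -
  obtain G where G: "\<forall>t. 0<t \<longrightarrow> t<a1 \<longrightarrow> t \<in> iter_dom (cet_dom a1 a2) T n0 \<and> (T^^n0) t = frac(G - t)" "frac(G - d) = a2"
    using G0 by blast
  have H: "\<not>(0 < frac(a2+w) \<and> frac(a2+w) < a1) \<and> frac(a2+w) \<noteq> a2" if "d-a1<w" "w<0" for w
    using Hn0[OF G] that d by auto
  have S: "\<forall>w. d-a1<w \<longrightarrow> w<0 \<longrightarrow> frac(a2+w) < a2 \<and> frac(a2+w) \<in> cet_dom a1 a2 \<and> T(frac(a2+w)) = frac(a2 + (c - a1 - a2) + w)"
  proof -
    define mm where "mm = min (a1-d) a2"
    define y where "y = - (mm / 2)"
    have m: "mm \<le> a1 - d" "mm \<le> a2" "0 < mm" using d(1,2) a1 a12 unfolding mm_def by auto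
    have y1: "d-a1<y" using m unfolding y_def by linarith
    have y2: "y<0" using m unfolding y_def by linarith
    have y3: "-a2<y" using m unfolding y_def by linarith
    note y = y1 y2 y3
    have "frac(a2 + y) = a2 + y" using y a1 a12 a2 by (simp add: frac_eq)
    then have "\<not> a2 < frac(a2 + y)" using y by simp
    then show ?thesis using stepV2[of "d-a1" 0 a2, OF H] y by blast
  qed
  have b1: "d - w \<in> iter_dom (cet_dom a1 a2) T (n0+1) \<and> (T^^(n0+1))(d - w) = frac(c - a1 + w)"
    if w: "d-a1<w" "w<0" for w
  proof -
    have e: "d - w \<in> iter_dom (cet_dom a1 a2) T n0" "(T^^n0) (d - w) = frac(a2 + w)" using Tn0[OF G] w d by auto
    have s: "frac(a2+w) \<in> cet_dom a1 a2" "T(frac(a2+w)) = frac(c - a1 + w)" using S w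
      by (auto simp: algebra_simps)
    show ?thesis using e s by (simp add: iter_dom_Suc)
  qed
  have b2: "a1 - w \<in> iter_dom (cet_dom a1 a2) T 1 \<and> (T^^1)(a1 - w) = frac(c - a1 + w)" if w: "0<w" "w<a1-d" for w
    using w d a12 a2 T1[of "a1-w"] by (simp add: iter_dom_def inD algebra_simps)
  have L: "0 < a1 - d" using d by simp
  obtain E where E1: "\<forall>w. -(a1-d)<w \<longrightarrow> w<0 \<longrightarrow> d - w \<in> iter_dom (cet_dom a1 a2) T (n0+1+(N-n0-1)) \<and> (T^^(n0+1+(N-n0-1)))(d - w) = frac(E + w)"
    and E2: "\<forall>w. 0<w \<longrightarrow> w<a1-d \<longrightarrow> a1 - w \<in> iter_dom (cet_dom a1 a2) T (1+(N-n0-1)) \<and> (T^^(1+(N-n0-1)))(a1-w) = frac(E + w)"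
    using chain[of "a1-d" G "\<lambda>w. d - w" "\<lambda>w. a1 - w" "n0+1" "c - a1" 1 "N-n0-1", OF L G _ _ _ b2] b1 d n0
    by fastforce
  have eq: "1+(N-n0-1) = N-n0" "n0+1+(N-n0-1) = N" using n0 by auto
  show ?thesis
  proof (rule exI[of _ E], intro allI impI conjI)
    fix t assume t: "d<t" "t<a1"
    have "d - (d - t) \<in> iter_dom (cet_dom a1 a2) T N \<and> (T^^N) (d - (d - t)) = frac(E + (d - t))"
      using E1[unfolded eq, rule_format, of "d - t"] t eq by auto
    then show "t \<in> iter_dom (cet_dom a1 a2) T N" "(T^^N) t = frac(E + d - t)"
      by (auto simp: algebra_simps)
    have "a1 - (a1 - t) \<in> iter_dom (cet_dom a1 a2) T (N-n0) \<and> (T^^(N-n0)) (a1 - (a1 - t)) = frac(E + (a1 - t))"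
      using E2[unfolded eq, rule_format, of "a1 - t"] t eq by auto
    then show "t \<in> iter_dom (cet_dom a1 a2) T (N-n0)" "(T^^(N-n0)) t = frac(E + a1 - t)"
      by (auto simp: algebra_simps)
  qed
qed

end



context L34 begin

lemma frac_int_add: "frac (E - frac E + z) = frac z"
proof -
  have "E - frac E = of_int \<lfloor>E\<rfloor>" by (simp add: frac_def)
  then show ?thesis by simp
qed

lemma final: "0 \<in> iter_img (cet_dom a1 a2) T N {0<..<d} \<or> a1 \<in> iter_img (cet_dom a1 a2) T N {d<..<a1}"
proof -
  obtain x where x: "0<x" "x<a1" "x \<in> iter_dom (cet_dom a1 a2) T N" "0 < (T^^N) x" "(T^^N) x < a1"
    using Nhit unfolding iter_img_def by auto
  have xd: "x \<noteq> d" using x dnot by auto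
  have m: "1 \<le> N - n0" "N - n0 < N" using n0 by auto
  have Nge: "1 \<le> N" using N2 by simp
  show ?thesis
  proof (cases "x < d")
    case True
    obtain E where E: "\<forall>t. 0<t \<longrightarrow> t<d \<longrightarrow> t \<in> iter_dom (cet_dom a1 a2) T (N-n0) \<and> (T^^(N-n0)) t = frac(E - t)
          \<and> t \<in> iter_dom (cet_dom a1 a2) T N \<and> (T^^N) t = frac(E + d - t)" using Il by blast
    define u where "u = frac E"
    have u: "0 \<le> u" "u < 1" unfolding u_def by (auto simp: frac_lt_1)
    have fr: "frac (E + z) = frac (u + z)" for z unfolding u_def by simp
    have y: "frac (u + (d - x)) = (T^^N) x" using E True x fr[of "d - x"] by (simp add: algebra_simps)
    consider "0 < u \<and> u < a1" | "u = 0" | "a1 \<le> u" using u by linarith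
    then show ?thesis
    proof cases
      case 1
      define t where "t = min u d / 2"
      have t: "0 < t" "t < u" "t < d" using 1 d unfolding t_def by auto
      have "(T^^(N-n0)) t = frac(u + - t)" using E t fr[of "-t"] by simp
      also have "\<dots> = u - t" using t u by (simp add: frac_eq)
      finally have "0 < (T^^(N-n0)) t \<and> (T^^(N-n0)) t < a1" using t 1 by simp
      moreover have "t \<in> iter_dom (cet_dom a1 a2) T (N-n0)" using E t by auto
      ultimately show ?thesis using notI1[of t "N-n0"] t d m by auto
    next
      case 2
      have "(T^^N) (d/2) = frac(u + d/2)" using E d fr[of "d/2"] by (simp add: algebra_simps)
      also have "\<dots> = d/2" using 2 d a1 a12 a2 by (simp add: frac_eq)
      finally have "has_periodic_point (cet_dom a1 a2) T"
        unfolding has_periodic_point_def using E d Nge by (intro exI[of _ "d/2"] exI[of _ N]) auto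
      then show ?thesis using aper by simp
    next
      case 3
      have big: "1 \<le> u + (d - x)"
      proof (rule ccontr)
        assume "\<not> 1 \<le> u + (d - x)"
        then have "frac (u + (d - x)) = u + (d - x)" using True u by (simp add: frac_eq)
        then show False using y x 3 True by simp
      qed
      have "frac (u + (d - x)) = u + (d - x) - 1" using big u True x d(1,2) a12 a2 by (simp add: frac_unique_iff)
      then have yv: "(T^^N) x = u + d - x - 1" using y by simp
      define t0 where "t0 = u + d - 1"
      have t0: "0 < t0" "t0 < d" using yv x u unfolding t0_def by auto
      have "(T^^N) t0 = frac (E + d - t0)" using E t0 by auto
      also have "\<dots> = frac (E - frac E + 1)" unfolding t0_def u_def by (simp add: algebra_simps)
      also have "\<dots> = 0" by (simp only: frac_int_add) simp
      finally have "0 \<in> iter_img (cet_dom a1 a2) T N {0<..<d}"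
        unfolding iter_img_def using E t0 by (intro image_eqI[of _ _ t0]) auto
      then show ?thesis by simp
    qed
  next
    case False
    then have xg: "d < x" using xd by simp
    obtain F where F: "\<forall>t. d<t \<longrightarrow> t<a1 \<longrightarrow> t \<in> iter_dom (cet_dom a1 a2) T N \<and> (T^^N) t = frac(F + d - t)
          \<and> t \<in> iter_dom (cet_dom a1 a2) T (N-n0) \<and> (T^^(N-n0)) t = frac(F + a1 - t)" using Ir by blast
    define v where "v = frac F"
    have v: "0 \<le> v" "v < 1" unfolding v_def by (auto simp: frac_lt_1)
    have fr: "frac (F + z) = frac (v + z)" for z unfolding v_def by simp
    have y: "frac (v + (d - x)) = (T^^N) x" using F xg x fr[of "d - x"] by (simp add: algebra_simps)
    consider "v < a1" | "v = a1" | "a1 < v" by linarith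
    then show ?thesis
    proof cases
      case 1
      define e where "e = min (a1 - v) (a1 - d) / 2"
      have e: "0 < e" "e < a1 - v" "e < a1 - d" using 1 d unfolding e_def by auto
      have "(T^^(N-n0)) (a1 - e) = frac(v + e)" using F e fr[of e] by (simp add: algebra_simps)
      also have "\<dots> = v + e" using e v a1 a12 a2 by (simp add: frac_eq)
      finally have "0 < (T^^(N-n0)) (a1 - e) \<and> (T^^(N-n0)) (a1 - e) < a1" using e v by simp
      moreover have "a1 - e \<in> iter_dom (cet_dom a1 a2) T (N-n0)" using F e by auto
      ultimately show ?thesis using notI1[of "a1 - e" "N-n0"] e d m by auto
    next
      case 2
      define p where "p = (a1 + d) / 2"
      have p: "d < p" "p < a1" using d unfolding p_def by auto
      have "(T^^N) p = frac(v + (d - p))" using F p fr[of "d - p"] by (simp add: algebra_simps)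
      also have "\<dots> = p" using 2 d a1 a12 a2 unfolding p_def by (simp add: frac_eq field_simps)
      finally have "has_periodic_point (cet_dom a1 a2) T"
        unfolding has_periodic_point_def using F p Nge by (intro exI[of _ p] exI[of _ N]) auto
      then show ?thesis using aper by simp
    next
      case 3
      have "frac (v + (d - x)) = v + (d - x)" using 3 v xg x d by (simp add: frac_eq)
      then have yv: "(T^^N) x = v + d - x" using y by simp
      define t0 where "t0 = v + d - a1"
      have t0: "d < t0" "t0 < a1" using yv x 3 unfolding t0_def by auto
      have "(T^^N) t0 = frac (F + d - t0)" using F t0 by auto
      also have "\<dots> = frac (F - frac F + a1)" unfolding t0_def v_def by (simp add: algebra_simps)
      also have "\<dots> = a1" by (simp only: frac_int_add) (use a1 a12 a2 in \<open>simp add: frac_eq\<close>)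
      finally have "a1 \<in> iter_img (cet_dom a1 a2) T N {d<..<a1}"
        unfolding iter_img_def using F t0 by (intro image_eqI[of _ _ t0]) auto
      then show ?thesis by simp
    qed
  qed
qed

end

theorem lemma3p4:
  fixes a1 a2 d :: real and T :: "real \<Rightarrow> real" and N n0 :: nat
  assumes cet: "CET3 a1 a2 T"
    and flip1: "flip_on T {0<..<a1}"
    and noflip2: "\<not> flip_on T {a1<..<a2}"
    and noflip3: "\<not> flip_on T {a2<..<1}"
    and order: "cyc_sets (T ` {0<..<a1}) (T ` {a2<..<1}) (T ` {a1<..<a2})"
    and aper: "\<not> has_periodic_point (cet_dom a1 a2) T"
    and N2: "N \<ge> 2"
    and Nhit: "iter_img (cet_dom a1 a2) T N {0<..<a1} \<inter> {0<..<a1} \<noteq> {}"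
    and Nleast: "\<And>n. 1 \<le> n \<Longrightarrow> n < N \<Longrightarrow>
                   iter_img (cet_dom a1 a2) T n {0<..<a1} \<inter> {0<..<a1} = {}"
    and n0: "1 \<le> n0" "n0 \<le> N - 1"
    and d: "d \<in> {0<..<a1}" "d \<in> iter_dom (cet_dom a1 a2) T n0" "(T ^^ n0) d = a2"
  shows "0 \<in> iter_img (cet_dom a1 a2) T N {0<..<d} \<or>
         a1 \<in> iter_img (cet_dom a1 a2) T N {d<..<a1}"
proof -
  obtain c where c: "\<forall>x. 0<x \<longrightarrow> x<a1 \<longrightarrow> T x = frac(c - x)"
      "\<forall>x. a1<x \<longrightarrow> x<a2 \<longrightarrow> T x = frac(x + c - a1 - a2)"
      "\<forall>x. a2<x \<longrightarrow> x<1 \<longrightarrow> T x = frac(x + c - a2)"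
    using derive_consts[OF cet flip1 noflip2 noflip3 order] by blast
  have a: "0 < a1" "a1 < a2" "a2 < 1" "inj_on T (cet_dom a1 a2)" using cet unfolding CET3_def by auto
  interpret L: L34 a1 a2 c d T N n0
    by (unfold_locales) (use a c aper N2 Nhit Nleast n0 d in auto)
  show ?thesis by (rule L.final)
qed

end
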